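(* Let $(X,d)$ be a compact metric space and $f_{1,\infty}$ a commutative $m$-periodic sequence of continuous surjective self-maps of $X$. If $(X,f_{1,\infty})$ is weakly mixing, then it is totally transitive.
   Context: Commutative: $f_i\circ f_j=f_j\circ f_i$ for all $i,j$. $m$-periodic: $f_{n+m}=f_n$ for all $n$. Write $f_1^n=f_n\circ\cdots\circ f_1$ and $f_{1,\infty}^{[k]}=\{f_{k(n-1)+1}^k\}_{n\ge1}$ with $f_n^i=f_{n+i-1}\circ\cdots\circ f_n$. Weakly mixing: for all non-empty open $U_1,U_2,V_1,V_2$ there is $n$ with $f_1^n(U_i)\cap V_i\ne\emptyset$, $i=1,2$. Topologically transitive: for all non-empty open $U,V$ some $n$ with $f_1^n(U)\cap V\ne\emptyset$. Totally transitive: $(X,f_{1,\infty}^{[k]})$ is topologically transitive for every $k\ge1$. *)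

theory Defs
  imports "HOL-Analysis.Analysis"
begin

text \<open>Non-autonomous systems: a sequence of maps f indexed from 1 (f 0 is ignored).
  comp_seg f i n = f (i+n-1) o ... o f i  (the identity for n = 0).\<close>

fun comp_seg :: "(nat \<Rightarrow> 'a \<Rightarrow> 'a) \<Rightarrow> nat \<Rightarrow> nat \<Rightarrow> 'a \<Rightarrow> 'a" where
  "comp_seg f i 0 = id"
| "comp_seg f i (Suc n) = f (i + n) \<circ> comp_seg f i n"

definition block_seq :: "nat \<Rightarrow> (nat \<Rightarrow> 'a \<Rightarrow> 'a) \<Rightarrow> nat \<Rightarrow> 'a \<Rightarrow> 'a" where
  "block_seq k f n = comp_seg f (k * (n - 1) + 1) k"

definition commutative_seq :: "'a set \<Rightarrow> (nat \<Rightarrow> 'a \<Rightarrow> 'a) \<Rightarrow> bool" where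
  "commutative_seq X f \<longleftrightarrow> (\<forall>i\<ge>1. \<forall>j\<ge>1. \<forall>x\<in>X. f i (f j x) = f j (f i x))"

definition periodic_seq :: "nat \<Rightarrow> (nat \<Rightarrow> 'a \<Rightarrow> 'a) \<Rightarrow> bool" where
  "periodic_seq m f \<longleftrightarrow> m \<ge> 1 \<and> (\<forall>n\<ge>1. f (n + m) = f n)"

definition topologically_transitive :: "'a::topological_space set \<Rightarrow> (nat \<Rightarrow> 'a \<Rightarrow> 'a) \<Rightarrow> bool" where
  "topologically_transitive X f \<longleftrightarrow>
     (\<forall>U V. openin (top_of_set X) U \<longrightarrow> U \<noteq> {} \<longrightarrow> openin (top_of_set X) V \<longrightarrow> V \<noteq> {} \<longrightarrow>
        (\<exists>n\<ge>1. comp_seg f 1 n ` U \<inter> V \<noteq> {}))"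

definition weakly_mixing :: "'a::topological_space set \<Rightarrow> (nat \<Rightarrow> 'a \<Rightarrow> 'a) \<Rightarrow> bool" where
  "weakly_mixing X f \<longleftrightarrow>
     (\<forall>U1 U2 V1 V2.
        openin (top_of_set X) U1 \<longrightarrow> U1 \<noteq> {} \<longrightarrow> openin (top_of_set X) U2 \<longrightarrow> U2 \<noteq> {} \<longrightarrow>
        openin (top_of_set X) V1 \<longrightarrow> V1 \<noteq> {} \<longrightarrow> openin (top_of_set X) V2 \<longrightarrow> V2 \<noteq> {} \<longrightarrow>
        (\<exists>n\<ge>1. comp_seg f 1 n ` U1 \<inter> V1 \<noteq> {} \<and> comp_seg f 1 n ` U2 \<inter> V2 \<noteq> {}))"

definition totally_transitive :: "'a::topological_space set \<Rightarrow> (nat \<Rightarrow> 'a \<Rightarrow> 'a) \<Rightarrow> bool" where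
  "totally_transitive X f \<longleftrightarrow> (\<forall>k\<ge>1. topologically_transitive X (block_seq k f))"

end

theory Submission
  imports Defs
begin

lemma cs_add: "comp_seg f i (a+b) = comp_seg f (i+a) b \<circ> comp_seg f i a"
  by (induction b) (auto simp: add.assoc)

lemma per_mult:
  fixes f :: "nat \<Rightarrow> 'b" and n k m :: nat
  assumes "\<forall>n\<ge>1. f (n + m) = f n" "n \<ge> 1"
  shows "f (n + k*m) = f n"
proof (induction k)
  case (Suc k)
  have "f (n + Suc k * m) = f ((n + k*m) + m)" by (simp add: algebra_simps)
  also have "\<dots> = f (n + k*m)" using assms by simp
  finally show ?case using Suc by simp
qed simp

lemma cs_per:
  fixes M i n :: nat
  assumes "\<forall>n\<ge>1. f (n + M) = f n" "i \<ge> 1"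
  shows "comp_seg f (i + M) n = comp_seg f i n"
proof (induction n)
  case (Suc n)
  have "f (i + n + M) = f (i + n)" using assms by auto
  moreover have "i + M + n = i + n + M" by simp
  ultimately have "f (i + M + n) = f (i + n)" by (simp add: ac_simps)
  then show ?case using Suc by simp
qed simp

lemma key:
  fixes M r q :: nat
  assumes "\<forall>n\<ge>1. f (n + M) = f n" "r < M"
  shows "comp_seg f (r+1) (M-r) \<circ> comp_seg f 1 (q*M + r) = comp_seg f 1 (Suc q * M)"
proof -
  have pq: "\<forall>n\<ge>1. f (n + q*M) = f n" using per_mult[OF assms(1)] by blast
  have a: "comp_seg f 1 (q*M + r) = comp_seg f 1 r \<circ> comp_seg f 1 (q*M)"
    using cs_add[of f 1 "q*M" r] cs_per[OF pq, of 1 r] by (simp add: add.commute)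
  have b: "comp_seg f (r+1) (M-r) \<circ> comp_seg f 1 r = comp_seg f 1 M"
    using cs_add[of f 1 r "M-r"] assms(2) by (simp add: add.commute)
  have c: "comp_seg f 1 (Suc q * M) = comp_seg f 1 M \<circ> comp_seg f 1 (q*M)"
    using cs_add[of f 1 "q*M" M] cs_per[OF pq, of 1 M] by (simp add: add.commute)
  have "comp_seg f (r+1) (M-r) \<circ> comp_seg f 1 (q*M + r)
      = (comp_seg f (r+1) (M-r) \<circ> comp_seg f 1 r) \<circ> comp_seg f 1 (q*M)"
    using a by (simp add: comp_assoc)
  then show ?thesis using b c by simp
qed

lemma block_cs: "comp_seg (block_seq k f) 1 n = comp_seg f 1 (k*n)"
proof (induction n)
  case (Suc n)
  have "comp_seg f 1 (k*n + k) = comp_seg f (1 + k*n) k \<circ> comp_seg f 1 (k*n)"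
    by (rule cs_add)
  then show ?case using Suc by (simp add: block_seq_def add.commute)
qed simp

definition Nset :: "(nat \<Rightarrow> 'a \<Rightarrow> 'a) \<Rightarrow> 'a set \<Rightarrow> 'a set \<Rightarrow> nat set" where
  "Nset f U V = {n. n \<ge> 1 \<and> comp_seg f 1 n ` U \<inter> V \<noteq> {}}"

context
  fixes X :: "'a::metric_space set" and f :: "nat \<Rightarrow> 'a \<Rightarrow> 'a"
  assumes cont: "\<And>n. n \<ge> 1 \<Longrightarrow> continuous_on X (f n)"
    and surj: "\<And>n. n \<ge> 1 \<Longrightarrow> f n ` X = X"
    and comm: "commutative_seq X f"
    and wm: "weakly_mixing X f"
begin

lemma cs_surj: "i \<ge> 1 \<Longrightarrow> comp_seg f i n ` X = X"
proof (induction n)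
  case (Suc n)
  have "comp_seg f i (Suc n) ` X = f (i+n) ` (comp_seg f i n ` X)"
    by (simp only: comp_seg.simps image_comp)
  also have "\<dots> = X" using Suc surj[of "i+n"] by simp
  finally show ?case .
qed simp

lemma cs_cont: "i \<ge> 1 \<Longrightarrow> continuous_on X (comp_seg f i n)"
proof (induction n)
  case 0 then show ?case by (simp add: continuous_on_id)
  case (Suc n)
  have "continuous_on X (f (i+n) \<circ> comp_seg f i n)"
    by (rule continuous_on_compose) (use Suc cs_surj cont in auto)
  then show ?case by simp
qed

lemma cs_in: "i \<ge> 1 \<Longrightarrow> x \<in> X \<Longrightarrow> comp_seg f i n x \<in> X"
  using cs_surj by blast

lemma f_cs_comm: "x \<in> X \<Longrightarrow> j \<ge> 1 \<Longrightarrow> i \<ge> 1 \<Longrightarrow> f j (comp_seg f i n x) = comp_seg f i n (f j x)"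
proof (induction n)
  case (Suc n)
  have "f j (f (i+n) (comp_seg f i n x)) = f (i+n) (f j (comp_seg f i n x))"
    using comm Suc cs_in unfolding commutative_seq_def by auto
  then show ?case using Suc by simp
qed simp

lemma cs_comm: "x \<in> X \<Longrightarrow> comp_seg f 1 a (comp_seg f 1 b x) = comp_seg f 1 b (comp_seg f 1 a x)"
proof (induction a)
  case (Suc a)
  have "f (1+a) (comp_seg f 1 b (comp_seg f 1 a x)) = comp_seg f 1 b (f (1+a) (comp_seg f 1 a x))"
    using f_cs_comm[of "comp_seg f 1 a x" "1+a" 1 b] cs_in Suc by auto
  then show ?case using Suc by simp
qed simp

lemma preim_open:
  assumes "i \<ge> 1" "openin (top_of_set X) V"
  shows "openin (top_of_set X) (X \<inter> comp_seg f i n -` V)"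
  using continuous_openin_preimage[OF cs_cont[OF assms(1)], where T=X and U=V] cs_in assms by auto

lemma inter_lemma:
  assumes "openin (top_of_set X) U1" "U1 \<noteq> {}" "openin (top_of_set X) V1" "V1 \<noteq> {}"
    "openin (top_of_set X) U2" "U2 \<noteq> {}" "openin (top_of_set X) V2" "V2 \<noteq> {}"
  shows "\<exists>U3 V3. openin (top_of_set X) U3 \<and> U3 \<noteq> {} \<and> openin (top_of_set X) V3 \<and> V3 \<noteq> {}
     \<and> Nset f U3 V3 \<subseteq> Nset f U1 V1 \<inter> Nset f U2 V2"
proof -
  obtain n where n: "n \<ge> 1" "comp_seg f 1 n ` U1 \<inter> U2 \<noteq> {}" "comp_seg f 1 n ` V1 \<inter> V2 \<noteq> {}"
    using wm assms unfolding weakly_mixing_def by meson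
  define U3 where "U3 = U1 \<inter> (X \<inter> comp_seg f 1 n -` U2)"
  define V3 where "V3 = V1 \<inter> (X \<inter> comp_seg f 1 n -` V2)"
  have sub: "U1 \<subseteq> X" "V1 \<subseteq> X" using assms openin_imp_subset by auto
  have o: "openin (top_of_set X) U3" "openin (top_of_set X) V3"
    unfolding U3_def V3_def using preim_open assms by auto
  have ne: "U3 \<noteq> {}" "V3 \<noteq> {}" using n sub unfolding U3_def V3_def by auto
  have "Nset f U3 V3 \<subseteq> Nset f U1 V1 \<inter> Nset f U2 V2"
  proof
    fix p assume "p \<in> Nset f U3 V3"
    then obtain x where x: "p \<ge> 1" "x \<in> U3" "comp_seg f 1 p x \<in> V3" unfolding Nset_def by auto
    have xX: "x \<in> X" using x sub U3_def by auto
    have "comp_seg f 1 p (comp_seg f 1 n x) \<in> V2"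
      using x cs_comm[OF xX, of p n] V3_def by auto
    moreover have "comp_seg f 1 n x \<in> U2" using x U3_def by auto
    ultimately have "p \<in> Nset f U2 V2" using x unfolding Nset_def by blast
    moreover have "p \<in> Nset f U1 V1" using x U3_def V3_def unfolding Nset_def by blast
    ultimately show "p \<in> Nset f U1 V1 \<inter> Nset f U2 V2" by blast
  qed
  then show ?thesis using o ne by blast
qed

lemma fin_lemma:
  fixes M :: nat and A :: "nat \<Rightarrow> 'a set"
  assumes "openin (top_of_set X) U" "U \<noteq> {}"
    "\<forall>r<M. openin (top_of_set X) (A r) \<and> A r \<noteq> {}"
  shows "\<exists>U3 V3. openin (top_of_set X) U3 \<and> U3 \<noteq> {} \<and> openin (top_of_set X) V3 \<and> V3 \<noteq> {}
     \<and> Nset f U3 V3 \<subseteq> (\<Inter>r<M. Nset f U (A r))"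
  using assms(3)
proof (induction M)
  case 0 then show ?case using assms by auto
next
  case (Suc M)
  then obtain U3 V3 where h: "openin (top_of_set X) U3" "U3 \<noteq> {}" "openin (top_of_set X) V3" "V3 \<noteq> {}"
     "Nset f U3 V3 \<subseteq> (\<Inter>r<M. Nset f U (A r))" by auto
  obtain U4 V4 where h4: "openin (top_of_set X) U4" "U4 \<noteq> {}" "openin (top_of_set X) V4" "V4 \<noteq> {}"
     "Nset f U4 V4 \<subseteq> Nset f U3 V3 \<inter> Nset f U (A M)"
  proof -
    have "openin (top_of_set X) (A M)" "A M \<noteq> {}" using Suc.prems by auto
    from inter_lemma[OF h(1-4) assms(1,2) this] that show ?thesis by blast
  qed
  have "Nset f U4 V4 \<subseteq> (\<Inter>r<Suc M. Nset f U (A r))"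
    using h4(5) h(5) by (auto simp: lessThan_Suc)
  then show ?case using h4 by blast
qed

lemma trans_ne:
  assumes "openin (top_of_set X) U" "U \<noteq> {}" "openin (top_of_set X) V" "V \<noteq> {}"
  shows "Nset f U V \<noteq> {}"
proof -
  have "\<exists>n\<ge>1. comp_seg f 1 n ` U \<inter> V \<noteq> {} \<and> comp_seg f 1 n ` U \<inter> V \<noteq> {}"
    using wm[unfolded weakly_mixing_def, rule_format, OF assms(1,2,1,2,3,4,3,4)] .
  then show ?thesis unfolding Nset_def by auto
qed

lemma main_lemma:
  assumes M: "M \<ge> 1" "\<forall>n\<ge>1. f (n + M) = f n"
    and UV: "openin (top_of_set X) U" "U \<noteq> {}" "openin (top_of_set X) V" "V \<noteq> {}"
  shows "\<exists>q\<ge>1. comp_seg f 1 (q*M) ` U \<inter> V \<noteq> {}"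
proof -
  define A where "A r = X \<inter> comp_seg f (r+1) (M-r) -` V" for r
  have VX: "V \<subseteq> X" using UV openin_imp_subset by auto
  have Aok: "\<forall>r<M. openin (top_of_set X) (A r) \<and> A r \<noteq> {}"
  proof (intro allI impI conjI)
    fix r assume "r < M"
    show "openin (top_of_set X) (A r)" unfolding A_def using preim_open UV by auto
    obtain y where "y \<in> V" using UV by auto
    then have "y \<in> comp_seg f (r+1) (M-r) ` X" using cs_surj[of "r+1" "M-r"] VX by auto
    then obtain x where "x \<in> X" "comp_seg f (r+1) (M-r) x = y" by auto
    then show "A r \<noteq> {}" using \<open>y \<in> V\<close> unfolding A_def by auto
  qed
  obtain U3 V3 where h: "openin (top_of_set X) U3" "U3 \<noteq> {}" "openin (top_of_set X) V3" "V3 \<noteq> {}"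
     "Nset f U3 V3 \<subseteq> (\<Inter>r<M. Nset f U (A r))"
    using fin_lemma[OF UV(1,2) Aok] by (elim exE conjE) (rule that)
  obtain n where "n \<in> Nset f U3 V3" using trans_ne[OF h(1-4)] by auto
  then have nin: "\<And>r. r < M \<Longrightarrow> n \<in> Nset f U (A r)" using h(5) by auto
  define q r where "q = n div M" and "r = n mod M"
  have rM: "r < M" using M r_def by auto
  have nq: "n = q*M + r" using q_def r_def by simp
  obtain x where x: "x \<in> U" "comp_seg f 1 n x \<in> A r" using nin[OF rM] unfolding Nset_def by auto
  have "comp_seg f (r+1) (M-r) (comp_seg f 1 n x) \<in> V" using x A_def by auto
  moreover have "comp_seg f (r+1) (M-r) (comp_seg f 1 n x) = comp_seg f 1 (Suc q * M) x"
    using fun_cong[OF key[OF M(2) rM, of q], of x] nq by simp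
  ultimately have "comp_seg f 1 (Suc q * M) x \<in> V" by simp
  then show ?thesis using x(1) by (intro exI[of _ "Suc q"]) auto
qed

end

theorem mainTheorem13:
  fixes X :: "'a::metric_space set" and f :: "nat \<Rightarrow> 'a \<Rightarrow> 'a" and m :: nat
  assumes "compact X"
    and "\<And>n. n \<ge> 1 \<Longrightarrow> continuous_on X (f n)"
    and "\<And>n. n \<ge> 1 \<Longrightarrow> f n ` X = X"
    and "commutative_seq X f"
    and "periodic_seq m f"
    and "weakly_mixing X f"
  shows "totally_transitive X f"
  unfolding totally_transitive_def topologically_transitive_def
proof (intro allI impI)
  fix k :: nat and U V
  assume k: "k \<ge> 1" and UV: "openin (top_of_set X) U" "U \<noteq> {}" "openin (top_of_set X) V" "V \<noteq> {}"
  have m: "m \<ge> 1" "\<forall>n\<ge>1. f (n + m) = f n" using assms(5) unfolding periodic_seq_def by auto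
  have per: "\<forall>n\<ge>1. f (n + k*m) = f n" using per_mult[OF m(2)] by blast
  have km: "k*m \<ge> 1" using k m by simp
  obtain q where q: "q \<ge> 1" "comp_seg f 1 (q*(k*m)) ` U \<inter> V \<noteq> {}"
    using main_lemma[OF assms(2,3,4,6) km per UV] by blast
  have "q*m \<ge> 1" using q m by simp
  moreover have "comp_seg (block_seq k f) 1 (q*m) ` U \<inter> V \<noteq> {}"
    using q(2) block_cs[of k f "q*m"] by (simp add: ac_simps)
  ultimately show "\<exists>n\<ge>1. comp_seg (block_seq k f) 1 n ` U \<inter> V \<noteq> {}" by blast
qed

end
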